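(* Let $g_{00},g_{11},g_{22},g_{33}$ solve system (SL) with positive initial data, and define $Ric_{11} = \frac{g_{11}^2-(g_{22}-g_{33})^2}{2g_{22}g_{33}}$, $Ric_{22} = \frac{g_{22}^2-(g_{11}+g_{33})^2}{2g_{11}g_{33}}$, $Ric_{33} = \frac{g_{33}^2-(g_{11}+g_{22})^2}{2g_{11}g_{22}}$, $S = -\frac{g_{11}^2+g_{22}^2+g_{33}^2+2(g_{11}g_{22}+g_{11}g_{33}-g_{22}g_{33})}{2g_{11}g_{22}g_{33}}$. Then as $t\to\infty$: $Ric_{11}/g_{11}\to 0$, $Ric_{22}\to -1$, $Ric_{33}\to-1$, and $S\to 0$.
   Context: Let $\det h = h_{00}h_{11}h_{22}h_{33}$, $\beta = \frac{1}{6(\det h)^2}$, and $p(x,y,z) = x^4 - x^3(y+z) + x^2yz + x(-y^3+y^2z+yz^2-z^3) + y^4 - y^3z - yz^3 + z^4$, $q(x,y,z) = 5x^4 - 3x^3(y+z) + x^2yz + x(y^3-y^2z-yz^2+z^3) - 3y^4 + 3y^3z + 3yz^3 - 3z^4$. System (SL): $\dot g_{00} = -\beta\,p(-g_{11},g_{22},g_{33})\,g_{00}^3$, $\dot g_{11} = -\beta\,q(-g_{11},g_{22},g_{33})\,g_{00}^2g_{11}$, $\dot g_{22} = -\beta\,q(g_{22},-g_{11},g_{33})\,g_{00}^2g_{22}$, $\dot g_{33} = -\beta\,q(g_{33},-g_{11},g_{22})\,g_{00}^2g_{33}$, with $g_{ii}(0)=h_{ii}>0$. This is Bach flow on $\mathbb{R}\times\widetilde{SL}(2,\mathbb{R})$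 in a diagonalizing left-invariant frame with structure matrix $E=\mathrm{diag}(-1,1,1)$; the displayed $Ric_{ii}$ and $S$ are the Ricci components and scalar curvature of the three-dimensional factor metric $\mathrm{diag}(g_{11},g_{22},g_{33})$ in that frame. *)

theory Defs
  imports "HOL-Analysis.Analysis"
begin

definition pSL :: "real \<Rightarrow> real \<Rightarrow> real \<Rightarrow> real" where
  "pSL x y z = x^4 - x^3*(y+z) + x^2*y*z + x*(- (y^3) + y^2*z + y*z^2 - z^3)
      + y^4 - y^3*z - y*z^3 + z^4"

definition qSL :: "real \<Rightarrow> real \<Rightarrow> real \<Rightarrow> real" where
  "qSL x y z = 5*x^4 - 3*x^3*(y+z) + x^2*y*z + x*(y^3 - y^2*z - y*z^2 + z^3)
      - 3*y^4 + 3*y^3*z + 3*y*z^3 - 3*z^4"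

definition betaSL :: "real \<Rightarrow> real \<Rightarrow> real \<Rightarrow> real \<Rightarrow> real" where
  "betaSL h00 h11 h22 h33 = 1 / (6 * (h00*h11*h22*h33)^2)"

definition solves_SL ::
  "(real \<Rightarrow> real) \<Rightarrow> (real \<Rightarrow> real) \<Rightarrow> (real \<Rightarrow> real) \<Rightarrow> (real \<Rightarrow> real)
   \<Rightarrow> real \<Rightarrow> real \<Rightarrow> real \<Rightarrow> real \<Rightarrow> bool" where
  "solves_SL g00 g11 g22 g33 h00 h11 h22 h33 \<longleftrightarrow>
     g00 0 = h00 \<and> g11 0 = h11 \<and> g22 0 = h22 \<and> g33 0 = h33 \<and>
     (\<forall>t\<ge>0.
       (g00 has_real_derivative
          (- betaSL h00 h11 h22 h33 * pSL (- g11 t) (g22 t) (g33 t) * (g00 t)^3))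
          (at t within {0..}) \<and>
       (g11 has_real_derivative
          (- betaSL h00 h11 h22 h33 * qSL (- g11 t) (g22 t) (g33 t) * (g00 t)^2 * g11 t))
          (at t within {0..}) \<and>
       (g22 has_real_derivative
          (- betaSL h00 h11 h22 h33 * qSL (g22 t) (- g11 t) (g33 t) * (g00 t)^2 * g22 t))
          (at t within {0..}) \<and>
       (g33 has_real_derivative
          (- betaSL h00 h11 h22 h33 * qSL (g33 t) (- g11 t) (g22 t) * (g00 t)^2 * g33 t))
          (at t within {0..}))"

definition Ric11 :: "real \<Rightarrow> real \<Rightarrow> real \<Rightarrow> real" where
  "Ric11 a b c = (a^2 - (b - c)^2) / (2*b*c)"
definition Ric22 :: "real \<Rightarrow> real \<Rightarrow> real \<Rightarrow> real" where
  "Ric22 a b c = (b^2 - (a + c)^2) / (2*a*c)"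
definition Ric33 :: "real \<Rightarrow> real \<Rightarrow> real \<Rightarrow> real" where
  "Ric33 a b c = (c^2 - (a + b)^2) / (2*a*b)"
definition scalS :: "real \<Rightarrow> real \<Rightarrow> real \<Rightarrow> real" where
  "scalS a b c = - (a^2 + b^2 + c^2 + 2*(a*b + a*c - b*c)) / (2*a*b*c)"

end

theory Submission
  imports Defs
begin


lemma gen_cont:
  assumes d: "\<And>t. t \<ge> 0 \<Longrightarrow> (f has_real_derivative f' t) (at t within {0..})"
  shows "continuous_on {0..} f"
  using d DERIV_continuous continuous_on_eq_continuous_within by fastforce

lemma gen_at:
  assumes "(f has_real_derivative D) (at t within {0..})" "t > 0"
  shows "(f has_real_derivative D) (at t)"
proof -
  have "t \<in> interior {0::real..}" using assms(2) by simp
  then show ?thesis using assms(1) at_within_interior by metis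
qed

lemma gen_anti:
  assumes d: "\<And>t. t \<ge> 0 \<Longrightarrow> (f has_real_derivative f' t) (at t within {0..})"
    and ab: "0 \<le> a" "a \<le> b" and neg: "\<And>t. a < t \<Longrightarrow> t < b \<Longrightarrow> f' t \<le> 0"
  shows "f b \<le> f a"
proof (rule DERIV_nonpos_imp_decreasing_open[OF ab(2)])
  fix t assume "a < t" "t < b"
  then show "\<exists>y. (f has_real_derivative y) (at t) \<and> y \<le> 0"
    using gen_at[OF d] neg ab by (metis less_eq_real_def order.strict_trans1)
next
  have "continuous_on {0..} f" by (rule gen_cont[where f'=f']) (rule d)
  moreover have "{a..b} \<subseteq> {0..}" using ab by auto
  ultimately show "continuous_on {a..b} f" using continuous_on_subset by blast
qed

lemma gen_gronwall:
  assumes d: "\<And>t. t \<ge> 0 \<Longrightarrow> (f has_real_derivative f' t) (at t within {0..})"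
    and t0: "0 \<le> t0" and le: "\<And>t. t \<ge> t0 \<Longrightarrow> f' t \<le> - k * f t" and t: "t0 \<le> t"
  shows "f t \<le> f t0 * exp (- k * (t - t0))"
proof -
  have d2: "\<And>t. t \<ge> 0 \<Longrightarrow> ((\<lambda>t. f t * exp (k*t)) has_real_derivative
      (f' t * exp (k*t) + f t * (exp (k*t) * k))) (at t within {0..})"
    by (auto intro!: derivative_eq_intros d)
  have "f t * exp (k*t) \<le> f t0 * exp (k*t0)"
  proof (rule gen_anti[OF d2 t0 t])
    fix u assume "t0 < u" "u < t"
    then have "f' u \<le> - k * f u" using le by auto
    then have "(f' u + f u * k) * exp (k*u) \<le> 0"
      by (intro mult_nonpos_nonneg) (auto simp: algebra_simps)
    then show "f' u * exp (k*u) + f u * (exp (k*u) * k) \<le> 0" by (simp add: algebra_simps)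
  qed
  then have "f t \<le> f t0 * exp (k*t0) / exp (k*t)"
    by (simp add: pos_le_divide_eq)
  also have "\<dots> = f t0 * exp (- k * (t - t0))"
  proof -
    have "exp (k*t0) / exp (k*t) = exp (- k * (t - t0))" by (simp add: exp_diff[symmetric] algebra_simps)
    then show ?thesis by (metis times_divide_eq_right)
  qed
  finally show ?thesis .
qed

lemma gen_linear:
  assumes d: "\<And>t. t \<ge> 0 \<Longrightarrow> (f has_real_derivative f' t) (at t within {0..})"
    and t0: "0 \<le> t0" and ge: "\<And>t. t \<ge> t0 \<Longrightarrow> f' t \<ge> c" and t: "t0 \<le> t"
  shows "f t \<ge> f t0 + c * (t - t0)"
proof -
  have d2: "\<And>t. t \<ge> 0 \<Longrightarrow> ((\<lambda>t. c*t - f t) has_real_derivative (c - f' t)) (at t within {0..})"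
    by (auto intro!: derivative_eq_intros d)
  have "c*t - f t \<le> c*t0 - f t0"
  proof (rule gen_anti[OF d2 t0 t])
    fix u assume "t0 < u" "u < t"
    then show "c - f' u \<le> 0" using ge[of u] by simp
  qed
  then show ?thesis by (simp add: algebra_simps)
qed

lemma gen_barrier:
  assumes d: "\<And>t. t \<ge> 0 \<Longrightarrow> (f has_real_derivative f' t) (at t within {0..})"
    and t1: "0 \<le> t1" and c: "c > 0"
    and neg: "\<And>t. t \<ge> t1 \<Longrightarrow> f t \<ge> K \<Longrightarrow> f' t \<le> - c"
  shows "\<exists>t2\<ge>t1. \<forall>t\<ge>t2. f t \<le> K"
proof -
  have main: "f t \<le> max K (f t1 - c*(t - t1))" if t: "t \<ge> t1" for t
  proof (rule ccontr)
    assume A: "\<not> ?thesis"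
    then have fK: "f t > K" and fl: "f t > f t1 - c*(t-t1)" by auto
    define S where "S = {t1..t} \<inter> f -` {..K}"
    show False
    proof (cases "S = {}")
      case True
      then have gt: "\<And>s. t1 \<le> s \<Longrightarrow> s \<le> t \<Longrightarrow> f s > K" unfolding S_def by force
      have d2: "\<And>u. u \<ge> 0 \<Longrightarrow> ((\<lambda>u. f u + c*u) has_real_derivative (f' u + c)) (at u within {0..})"
        by (auto intro!: derivative_eq_intros d)
      have "f t + c*t \<le> f t1 + c*t1"
      proof (rule gen_anti[OF d2 t1 t])
        fix u assume "t1 < u" "u < t"
        then show "f' u + c \<le> 0" using gt[of u] neg[of u] by simp
      qed
      then show False using fl by (simp add: algebra_simps)
    next
      case False
      have cl: "closed S" unfolding S_def
        by (rule continuous_closed_preimage)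
           (use continuous_on_subset[OF gen_cont[where f'=f', OF d]] t1 in auto)
      have bdd: "bdd_above S" unfolding S_def by auto
      define s0 where "s0 = Sup S"
      have s0S: "s0 \<in> S" using closed_contains_Sup[OF False bdd cl] s0_def by simp
      then have s0: "t1 \<le> s0" "s0 \<le> t" "f s0 \<le> K" unfolding S_def by auto
      have gt: "f s > K" if "s0 < s" "s \<le> t" for s
      proof (rule ccontr)
        assume "\<not> f s > K"
        then have "s \<in> S" unfolding S_def using that s0 by auto
        then have "s \<le> s0" unfolding s0_def using bdd by (simp add: cSup_upper)
        then show False using that by simp
      qed
      have "f t \<le> f s0"
      proof (rule gen_anti[where f'=f', OF d])
        fix u assume "s0 < u" "u < t"
        then show "f' u \<le> 0" using gt[of u] neg[of u] s0 c by simp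
      qed (use s0 t1 in auto)
      then show False using s0 fK by simp
    qed
  qed
  define t2 where "t2 = t1 + \<bar>f t1 - K\<bar> / c"
  have "\<forall>t\<ge>t2. f t \<le> K"
  proof (intro allI impI)
    fix t assume "t \<ge> t2"
    then have tt: "t \<ge> t1" "c*(t - t1) \<ge> \<bar>f t1 - K\<bar>" unfolding t2_def using c
      by (auto simp: field_simps intro: order_trans[of _ "t1 + \<bar>f t1 - K\<bar> / c"])
    then show "f t \<le> K" using main[OF tt(1)] by (simp add: max_def split: if_splits; linarith)
  qed
  moreover have "t2 \<ge> t1" unfolding t2_def using c by auto
  ultimately show ?thesis by blast
qed



definition TT :: "real \<Rightarrow> real \<Rightarrow> real \<Rightarrow> real" where "TT x y z = 1 / (6*(x*y*z)^2)"

lemma idQx: "m = (y+z)/2 \<Longrightarrow> e = ((y-z)/2)^2 \<Longrightarrow>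
  qSL (-x) y z = 5*x^4 + 6*x^3*m + x^2*m^2 - x^2*e - 8*x*m*e - 36*m^2*e - 12*e^2"
  unfolding qSL_def by (simp add: field_simps; algebra)

lemma idS: "m = (y+z)/2 \<Longrightarrow> e = ((y-z)/2)^2 \<Longrightarrow>
  y*qSL y (-x) z + z*qSL z (-x) y =
  -6*x^4*m - 8*x^3*m^2 + 4*x^3*e - 2*x^2*m^3 + 2*x^2*m*e + 32*x*m^2*e + 16*x*e^2 + 72*m^3*e + 88*m*e^2"
  unfolding qSL_def by (simp add: field_simps; algebra)

lemma idGh: "m = (y+z)/2 \<Longrightarrow> e = ((y-z)/2)^2 \<Longrightarrow>
  y*qSL y (-x) z - z*qSL z (-x) y = (y-z)*
  (-3*x^4 - 2*x^3*m - x^2*m^2 + x^2*e + 16*x*m^3 + 8*x*m*e + 24*m^4 + 52*m^2*e + 4*e^2)"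
  unfolding qSL_def by (simp add: field_simps; algebra)

lemma idK: "qSL y (-x) z - qSL z (-x) y = (y-z)*(2*x^3 + x*(6*y^2+4*y*z+6*z^2) + 8*y^3+4*y^2*z+4*y*z^2+8*z^3)"
  unfolding qSL_def by (simp add: field_simps; algebra)

lemma iddet: "pSL (-x) y z + qSL (-x) y z + qSL y (-x) z + qSL z (-x) y = 0"
  unfolding pSL_def qSL_def by algebra

lemma TT_pos: "x>0 \<Longrightarrow> y>0 \<Longrightarrow> z>0 \<Longrightarrow> TT x y z > 0"
  unfolding TT_def by simp

lemma ineqP:
  assumes "x>0" "y>0" "z>0"
  shows "(- TT x y z * qSL (-x) y z * x) * (y+z) + x * ((- TT x y z * qSL y (-x) z * y) + (- TT x y z * qSL z (-x) y * z)) \<le> 0"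
proof -
  define m where "m = (y+z)/2"
  define e where "e = ((y-z)/2)^2"
  have m: "m > 0" "y + z = 2*m" using assms unfolding m_def by auto
  have e: "e \<ge> 0" unfolding e_def by simp
  have eq: "(y+z)*qSL (-x) y z + (y*qSL y (-x) z + z*qSL z (-x) y) =
     4*x^4*m + 4*x^3*m^2 + 4*x^3*e + 16*x*m^2*e + 16*x*e^2 + 64*m*e^2"
    unfolding m(2) idQx[OF m_def e_def] idS[OF m_def e_def] by algebra
  have nn: "4*x^4*m + 4*x^3*m^2 + 4*x^3*e + 16*x*m^2*e + 16*x*e^2 + 64*m*e^2 \<ge> 0"
    using m e assms by simp
  have "(- TT x y z * qSL (-x) y z * x) * (y+z) + x * ((- TT x y z * qSL y (-x) z * y) + (- TT x y z * qSL z (-x) y * z))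
     = - (TT x y z * x) * ((y+z)*qSL (-x) y z + (y*qSL y (-x) z + z*qSL z (-x) y))"
    by (simp add: algebra_simps)
  also have "\<dots> \<le> 0" unfolding eq using nn TT_pos[OF assms] assms
    by (simp add: mult_nonneg_nonneg)
  finally show ?thesis .
qed

lemma aux_cross: "dy = -T*A*y \<Longrightarrow> dz = -T*B*z \<Longrightarrow> A - B = (y-z)*K \<Longrightarrow> dy*z - dz*y = -T*y*z*(y-z)*(K::real)"
proof -
  assume a: "dy = -T*A*y" "dz = -T*B*z" "A - B = (y-z)*K"
  have "dy*z - dz*y = -T*y*z*(A - B)" unfolding a(1,2) by (simp add: algebra_simps)
  then show ?thesis unfolding a(3) by (simp add: algebra_simps)
qed

lemma aux_E: "(p::real)>0 \<Longrightarrow> 4*q*p*(- T*y*z*q*K) / (p^2)^2 = - (4*T*y*z*K/p) * (q^2/p^2)"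
  by (simp add: field_simps power2_eq_square)

lemma aux_yz: "4*(y*z) \<le> ((y::real)+z)^2"
proof -
  have "(y+z)^2 - 4*(y*z) = (y-z)^2" by (simp add: power2_eq_square algebra_simps)
  then show ?thesis by (metis diff_ge_0_iff_ge zero_le_power2)
qed

lemma aux_c1: "(p::real)>0 \<Longrightarrow> x>0 \<Longrightarrow> 32/(3*(x*p)) = 8*p^2 / (3*x*(p^2/4)*p)"
  by (simp add: field_simps power2_eq_square)

lemma aux_c2: "(p::real)>0 \<Longrightarrow> x>0 \<Longrightarrow> y > 0 \<Longrightarrow> z > 0 \<Longrightarrow> 8*p^2 / (3*x*(y*z)*p) = 2*(4*x*p^2) / (3*x^2*y*z*p)"
  by (simp add: field_simps power2_eq_square)

lemma aux_c3: "(p::real)>0 \<Longrightarrow> x>0 \<Longrightarrow> y > 0 \<Longrightarrow> z > 0 \<Longrightarrow> 2*K / (3*x^2*y*z*p) = 4*(1/(6*(x*y*z)^2))*y*z*K/p"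
  by (simp add: field_simps power2_eq_square)

lemma ineqR:
  assumes pos: "x>0" "y>0" "z>0" and P: "x*(y+z) \<le> P0"
    and dy: "dy = - TT x y z * qSL y (-x) z * y" and dz: "dz = - TT x y z * qSL z (-x) y * z"
  shows "(2*(y-z)*(dy-dz)*(y+z)^2 - (y-z)^2*(2*(y+z)*(dy+dz))) / ((y+z)^2)^2
     \<le> - (32/(3*P0)) * ((y-z)^2/(y+z)^2)"
proof -
  define K where "K = 2*x^3 + x*(6*y^2+4*y*z+6*z^2) + 8*y^3+4*y^2*z+4*y*z^2+8*z^3"
  define T where "T = TT x y z"
  have T: "T = 1/(6*(x*y*z)^2)" unfolding T_def TT_def ..
  have p: "y + z > 0" using pos by simp
  have P0: "P0 > 0" using P pos by (smt (verit) mult_pos_pos)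
  have cross: "dy*z - dz*y = - T*y*z*(y-z)*K"
    by (rule aux_cross[OF dy[folded T_def] dz[folded T_def]]) (simp add: idK K_def)
  have num: "2*(y-z)*(dy-dz)*(y+z)^2 - (y-z)^2*(2*(y+z)*(dy+dz)) = 4*(y-z)*(y+z)*(dy*z - dz*y)"
    by (simp add: algebra_simps power2_eq_square)
  have E: "(2*(y-z)*(dy-dz)*(y+z)^2 - (y-z)^2*(2*(y+z)*(dy+dz))) / ((y+z)^2)^2
      = - (4*T*y*z*K/(y+z)) * ((y-z)^2/(y+z)^2)"
    unfolding num cross by (rule aux_E[OF p])
  have K: "K \<ge> 4*x*(y+z)^2"
  proof -
    have "K - 4*x*(y+z)^2 = 2*x^3 + 2*x*(y-z)^2 + 8*y^3+4*y^2*z+4*y*z^2+8*z^3"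
      unfolding K_def by (simp add: algebra_simps power2_eq_square)
    also have "\<dots> \<ge> 0" using pos by simp
    finally show ?thesis by simp
  qed
  have yz: "4*(y*z) \<le> (y+z)^2" by (rule aux_yz)
  have "32/(3*P0) \<le> 32/(3*(x*(y+z)))" using P P0 pos p by (simp add: frac_le)
  also have "\<dots> = 8*(y+z)^2 / (3*x*((y+z)^2/4)*(y+z))" using aux_c1[OF p pos(1)] .
  also have "\<dots> \<le> 8*(y+z)^2 / (3*x*(y*z)*(y+z))"
    using pos p yz by (intro divide_left_mono mult_right_mono mult_left_mono mult_pos_pos) auto
  also have "\<dots> = 2*(4*x*(y+z)^2) / (3*x^2*y*z*(y+z))" using aux_c2[OF p pos] .
  also have "\<dots> \<le> 2*K / (3*x^2*y*z*(y+z))" using K pos p by (intro divide_right_mono) auto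
  also have "\<dots> = 4*T*y*z*K/(y+z)" unfolding T using aux_c3[OF p pos] .
  finally have c: "32/(3*P0) \<le> 4*T*y*z*K/(y+z)" .
  have r: "(y-z)^2/(y+z)^2 \<ge> 0" by simp
  show ?thesis unfolding E using mult_right_mono[OF c r] by simp
qed

lemma polyN:
  fixes x m e :: real
  assumes m: "0 < m" "m \<le> x" and e: "0 \<le> e" "e \<le> m^2/100"
  shows "-16*x^4*m - 20*x^3*m^2 + 4*x^3*e - 4*x^2*m^3 + 4*x^2*m*e + 48*x*m^2*e + 16*x*e^2 + 144*m^3*e + 112*m*e^2
         \<le> -16*x^4*m"
proof -
  have x: "0 < x" using m by simp
  have e2: "e^2 \<le> m^4/10000"
  proof -
    have "e^2 \<le> (m^2/100)^2" using e by (intro power_mono) auto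
    then show ?thesis by (simp add: power2_eq_square power4_eq_xxxx)
  qed
  have mx2: "m^2 \<le> x^2" "m^3 \<le> x^3" using m by (intro power_mono; simp)+
  have f1: "x^3*e \<le> x^3*m^2/100" using e x by (simp add: mult_left_mono)
  have f2: "x^2*m*e \<le> x^3*m^2/100"
  proof -
    have "x^2*m*e \<le> x^2*m*(m^2/100)" using e x m by (intro mult_left_mono) auto
    also have "\<dots> = (x^2*m^2/100)*m" by (simp add: power2_eq_square)
    also have "\<dots> \<le> (x^2*m^2/100)*x" using m by (intro mult_left_mono) auto
    also have "\<dots> = x^3*m^2/100" by (simp add: power2_eq_square power3_eq_cube)
    finally show ?thesis .
  qed
  have f3: "x*m^2*e \<le> x^3*m^2/100"
  proof -
    have "x*m^2*e \<le> x*m^2*(m^2/100)" using e x m by (intro mult_left_mono) auto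
    also have "\<dots> = (x*m^2/100)*m^2" by (simp add: power2_eq_square)
    also have "\<dots> \<le> (x*m^2/100)*x^2" using m x mx2 by (intro mult_left_mono) auto
    also have "\<dots> = x^3*m^2/100" by (simp add: power2_eq_square power3_eq_cube)
    finally show ?thesis .
  qed
  have f4: "m^3*e \<le> x^3*m^2/100"
  proof -
    have "m^3*e \<le> m^3*(m^2/100)" using e x m by (intro mult_left_mono) auto
    also have "\<dots> = (m^2/100)*m^3" by (simp add: power2_eq_square)
    also have "\<dots> \<le> (m^2/100)*x^3" using m x mx2 by (intro mult_left_mono) auto
    also have "\<dots> = x^3*m^2/100" by (simp add: power2_eq_square power3_eq_cube)
    finally show ?thesis .
  qed
  have f5: "x*e^2 \<le> x^3*m^2/100"
  proof -
    have "x*e^2 \<le> x*(m^4/10000)" using e2 x by (intro mult_left_mono) auto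
    also have "\<dots> \<le> x*(m^2*x^2/100)"
      using m x mx2 by (intro mult_left_mono) (auto simp: power4_eq_xxxx power2_eq_square mult_mono)
    also have "\<dots> = x^3*m^2/100" by (simp add: power2_eq_square power3_eq_cube)
    finally show ?thesis .
  qed
  have f6: "m*e^2 \<le> x^3*m^2/100"
  proof -
    have "m*e^2 \<le> m*(m^4/10000)" using e2 m by (intro mult_left_mono) auto
    also have "\<dots> \<le> m*(m*x^3/100)"
      using m x mx2 by (intro mult_left_mono) (auto simp: power4_eq_xxxx power3_eq_cube mult_mono)
    also have "\<dots> = x^3*m^2/100" by (simp add: power2_eq_square power3_eq_cube)
    finally show ?thesis .
  qed
  have p: "x^2*m^3 \<ge> 0" "x^3*m^2 \<ge> 0" using m x by auto
  show ?thesis using f1 f2 f3 f4 f5 f6 p by linarith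
qed

lemma polyA:
  fixes x m e :: real
  assumes m: "0 < x" "x \<le> m" and e: "0 \<le> e"
  shows "8*x^4+8*x^3*m+2*x^2*m^2 - 2*x^2*e - 16*x*m^3 - 16*x*m*e - 24*m^4 - 88*m^2*e - 16*e^2 \<le> -22*m^4"
proof -
  have mx: "x^2 \<le> m^2" "x^3 \<le> m^3" using m by (intro power_mono; simp)+
  have f1: "x^4 \<le> x*m^3" using mx m by (simp add: power4_eq_xxxx power3_eq_cube mult_left_mono)
  have f2: "x^3*m \<le> x*m^3"
  proof -
    have "x^3*m = x*(x^2*m)" by (simp add: power2_eq_square power3_eq_cube)
    also have "\<dots> \<le> x*(m^2*m)" using mx m by (intro mult_left_mono mult_right_mono) auto
    also have "\<dots> = x*m^3" by (simp add: power2_eq_square power3_eq_cube)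
    finally show ?thesis .
  qed
  have f3: "x^2*m^2 \<le> x*m^3"
  proof -
    have "x^2*m^2 = (x*m^2)*x" by (simp add: power2_eq_square)
    also have "\<dots> \<le> (x*m^2)*m" using m by (intro mult_left_mono) auto
    also have "\<dots> = x*m^3" by (simp add: power2_eq_square power3_eq_cube)
    finally show ?thesis .
  qed
  have f4: "x*m^3 \<le> m^4" using m by (simp add: power4_eq_xxxx power3_eq_cube mult_right_mono)
  have p: "x^2*e \<ge> 0" "x*m*e \<ge> 0" "m^2*e \<ge> 0" "e^2 \<ge> 0" using m e by auto
  show ?thesis using f1 f2 f3 f4 p by linarith
qed

lemma polyS:
  fixes x m e :: real
  assumes m: "0 < x" "x \<le> m" and e: "0 \<le> e" "e \<le> x^2/1000"
  shows "6*x^4*m + 8*x^3*m^2 - 4*x^3*e + 2*x^2*m^3 - 2*x^2*m*e - 32*x*m^2*e - 16*x*e^2 - 72*m^3*e - 88*m*e^2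
         \<ge> x^2*m^3"
proof -
  have mx: "x^2 \<le> m^2" "x^3 \<le> m^3" using m by (intro power_mono; simp)+
  have e2: "e^2 \<le> x^4/1000000"
  proof -
    have "e^2 \<le> (x^2/1000)^2" using e by (intro power_mono) auto
    then show ?thesis by (simp add: power2_eq_square power4_eq_xxxx)
  qed
  have f1: "x^3*e \<le> x^2*m^3/1000"
  proof -
    have "x^3*e \<le> x^3*(x^2/1000)" using e m by (intro mult_left_mono) auto
    also have "\<dots> = (x^2/1000)*x^3" by simp
    also have "\<dots> \<le> (x^2/1000)*m^3" using mx m by (intro mult_left_mono) auto
    finally show ?thesis by simp
  qed
  have f2: "x^2*m*e \<le> x^2*m^3/1000"
  proof -
    have "x^2*m*e \<le> x^2*m*(x^2/1000)" using e m by (intro mult_left_mono) auto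
    also have "\<dots> = (x^2*m/1000)*x^2" by simp
    also have "\<dots> \<le> (x^2*m/1000)*m^2" using mx m by (intro mult_left_mono) auto
    also have "\<dots> = x^2*m^3/1000" by (simp add: power2_eq_square power3_eq_cube)
    finally show ?thesis .
  qed
  have f3: "x*m^2*e \<le> x^2*m^3/1000"
  proof -
    have "x*m^2*e \<le> x*m^2*(x^2/1000)" using e m by (intro mult_left_mono) auto
    also have "\<dots> = (x^2*m^2/1000)*x" by (simp add: power2_eq_square)
    also have "\<dots> \<le> (x^2*m^2/1000)*m" using mx m by (intro mult_left_mono) auto
    also have "\<dots> = x^2*m^3/1000" by (simp add: power2_eq_square power3_eq_cube)
    finally show ?thesis .
  qed
  have f4: "m^3*e \<le> x^2*m^3/1000"
    using e m by (simp add: mult_left_mono)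
  have f5: "x*e^2 \<le> x^2*m^3/1000"
  proof -
    have "x*e^2 \<le> x*(x^4/1000000)" using e2 m by (intro mult_left_mono) auto
    also have "\<dots> = (x^2/1000000)*x^3" by (simp add: power2_eq_square power3_eq_cube power4_eq_xxxx)
    also have "\<dots> \<le> (x^2/1000000)*m^3" using mx m by (intro mult_left_mono) auto
    finally have "x*e^2 \<le> (x^2/1000000)*m^3" .
    moreover have "0 \<le> x^2*m^3" using m by simp
    ultimately show ?thesis by linarith
  qed
  have f6: "m*e^2 \<le> x^2*m^3/1000"
  proof -
    have "m*e^2 \<le> m*(x^4/1000000)" using e2 m by (intro mult_left_mono) auto
    also have "\<dots> = (x^2*m/1000000)*x^2" by (simp add: power2_eq_square power4_eq_xxxx)
    also have "\<dots> \<le> (x^2*m/1000000)*m^2" using mx m by (intro mult_left_mono) auto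
    also have "\<dots> = x^2*m^3/1000000" by (simp add: power2_eq_square power3_eq_cube)
    finally have "m*e^2 \<le> x^2*m^3/1000000" .
    moreover have "0 \<le> x^2*m^3" using m by simp
    ultimately show ?thesis by linarith
  qed
  have p: "x^4*m \<ge> 0" "x^3*m^2 \<ge> 0" "x^2*m^3 \<ge> 0" using m by auto
  show ?thesis using f1 f2 f3 f4 f5 f6 p by linarith
qed

lemma T_lower:
  assumes pos: "x>0" "y>0" "z>0" and m: "m = (y+z)/2"
  shows "TT x y z \<ge> 1/(6*x^2*m^4)"
proof -
  have "m^2 = (y+z)^2/4" unfolding m by (simp add: power_divide)
  then have yz: "y*z \<le> m^2" using aux_yz[of y z] by linarith
  have "(x*y*z)^2 = x^2*(y*z)^2" by (simp add: power2_eq_square)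
  also have "\<dots> \<le> x^2*(m^2)^2" using yz pos by (intro mult_left_mono power_mono) auto
  finally have "(x*y*z)^2 \<le> x^2*m^4" by (simp add: power4_eq_xxxx power2_eq_square)
  moreover have "m > 0" using pos m by simp
  ultimately show ?thesis unfolding TT_def using pos
    by (intro frac_le) auto
qed

lemma ineqS:
  assumes pos: "x>0" "y>0" "z>0" and P: "x*(y+z) \<le> P0"
    and r: "(y-z)^2/(y+z)^2 \<le> 1/100" and s: "x/(y+z) \<ge> 1/2"
    and dx: "dx = - TT x y z * qSL (-x) y z * x"
    and dy: "dy = - TT x y z * qSL y (-x) z * y" and dz: "dz = - TT x y z * qSL z (-x) y * z"
  shows "(dx*(y+z) - x*(dy+dz))/(y+z)^2 \<le> -4/(3*P0)"
proof -
  define m where "m = (y+z)/2"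
  define e where "e = ((y-z)/2)^2"
  define T where "T = TT x y z"
  define N where "N = -16*x^4*m - 20*x^3*m^2 + 4*x^3*e - 4*x^2*m^3 + 4*x^2*m*e + 48*x*m^2*e + 16*x*e^2 + 144*m^3*e + 112*m*e^2"
  have m: "m > 0" "y + z = 2*m" using pos unfolding m_def by auto
  have e0: "e \<ge> 0" unfolding e_def by simp
  have em: "e \<le> m^2/100"
  proof -
    have "(y-z)^2 \<le> (y+z)^2/100" using r m by (simp add: field_simps)
    then show ?thesis unfolding e_def m_def by (simp add: power_divide)
  qed
  have mx: "m \<le> x" using s m by (simp add: field_simps)
  have T: "T \<ge> 1/(6*x^2*m^4)" unfolding T_def by (rule T_lower[OF pos m_def])
  have Tp: "T > 0" unfolding T_def by (rule TT_pos[OF pos])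
  have key: "dx*(y+z) - x*(dy+dz) = T*x*N"
  proof -
    have "dx*(y+z) - x*(dy+dz) = T*x*((y*qSL y (-x) z + z*qSL z (-x) y) - 2*m*qSL (-x) y z)"
      unfolding dx dy dz T_def[symmetric] m(2) by (simp add: algebra_simps)
    also have "\<dots> = T*x*N" unfolding idQx[OF m_def e_def] idS[OF m_def e_def] N_def by algebra
    finally show ?thesis .
  qed
  have N: "N \<le> -16*x^4*m" unfolding N_def by (rule polyN[OF m(1) mx e0 em])
  have "(dx*(y+z) - x*(dy+dz))/(y+z)^2 = T*x*N/(4*m^2)" by (simp only: key) (simp add: m(2) power2_eq_square)
  also have "\<dots> \<le> T*x*(-16*x^4*m)/(4*m^2)"
    using N Tp pos m by (intro divide_right_mono mult_left_mono) auto
  also have "\<dots> = -(4*x^5/m)*T" using m by (simp add: field_simps eval_nat_numeral)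
  also have "\<dots> \<le> -(4*x^5/m)*(1/(6*x^2*m^4))" using T m pos by (intro mult_left_mono_neg) auto
  also have "\<dots> = -(2/3)*(x^3/m^5)" using m pos by (simp add: field_simps eval_nat_numeral)
  also have "\<dots> \<le> -(2/3)*(m^3/m^5)"
    using mx m by (intro mult_left_mono_neg divide_right_mono power_mono) auto
  also have "\<dots> = -(2/3)*(1/m^2)" using m by (simp add: field_simps eval_nat_numeral)
  also have "\<dots> \<le> -(2/3)*(2/P0)"
  proof -
    have "m*m \<le> x*m" using mx m by (intro mult_right_mono) auto
    moreover have "x*(y+z) = 2*(x*m)" using m by simp
    ultimately have "2*m^2 \<le> P0" using P unfolding power2_eq_square by linarith
    moreover have "0 < 2*m^2" using m by simp
    ultimately have "P0 > 0" by linarith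
    with \<open>2*m^2 \<le> P0\<close> have "2/P0 \<le> 1/m^2" using m by (simp add: field_simps)
    then show ?thesis by simp
  qed
  also have "\<dots> = -4/(3*P0)" by simp
  finally show ?thesis .
qed

lemma ineqU:
  assumes pos: "x>0" "y>0" "z>0" and P: "x*(y+z) \<le> P0" and s: "x/(y+z) \<le> 1/2"
    and dx: "dx = - TT x y z * qSL (-x) y z * x"
    and dy: "dy = - TT x y z * qSL y (-x) z * y" and dz: "dz = - TT x y z * qSL z (-x) y * z"
  shows "(2*(y-z)*(dy-dz)*x^2 - (y-z)^2*(2*x*dx))/(x^2)^2 \<le> -(44/(3*P0)) * ((y-z)^2/x^2)"
proof -
  define m where "m = (y+z)/2"
  define e where "e = ((y-z)/2)^2"
  define T where "T = TT x y z"
  define Gh where "Gh = -3*x^4 - 2*x^3*m - x^2*m^2 + x^2*e + 16*x*m^3 + 8*x*m*e + 24*m^4 + 52*m^2*e + 4*e^2"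
  define A where "A = 8*x^4+8*x^3*m+2*x^2*m^2 - 2*x^2*e - 16*x*m^3 - 16*x*m*e - 24*m^4 - 88*m^2*e - 16*e^2"
  have m: "m > 0" "y + z = 2*m" using pos unfolding m_def by auto
  have e0: "e \<ge> 0" unfolding e_def by simp
  have xm: "x \<le> m" using s m by (simp add: field_simps)
  have T: "T \<ge> 1/(6*x^2*m^4)" unfolding T_def by (rule T_lower[OF pos m_def])
  have Tp: "T > 0" unfolding T_def by (rule TT_pos[OF pos])
  have dyz: "dy - dz = -T*(y-z)*Gh"
  proof -
    have "dy - dz = -T*(y*qSL y (-x) z - z*qSL z (-x) y)" unfolding dy dz T_def by (simp add: algebra_simps)
    then show ?thesis unfolding idGh[OF m_def e_def] Gh_def by simp
  qed
  have AQ: "qSL (-x) y z - Gh = A" unfolding idQx[OF m_def e_def] Gh_def A_def by algebra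
  have num: "2*(y-z)*(dy-dz)*x^2 - (y-z)^2*(2*x*dx) = 2*T*(y-z)^2*x^2*A"
    unfolding dyz dx T_def[symmetric] AQ[symmetric] by (simp add: algebra_simps power2_eq_square)
  have E: "(2*(y-z)*(dy-dz)*x^2 - (y-z)^2*(2*x*dx))/(x^2)^2 = (2*T*A) * ((y-z)^2/x^2)"
    unfolding num using pos by (simp add: field_simps eval_nat_numeral)
  have A: "A \<le> -22*m^4" unfolding A_def by (rule polyA[OF pos(1) xm e0])
  have "2*T*A \<le> 2*T*(-22*m^4)" using A Tp by (intro mult_left_mono) auto
  also have "\<dots> = -(44*m^4)*T" by simp
  also have "\<dots> \<le> -(44*m^4)*(1/(6*x^2*m^4))" using T m by (intro mult_left_mono_neg) auto
  also have "\<dots> = -(22/3)*(1/x^2)" using m pos by (simp add: field_simps)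
  also have "\<dots> \<le> -(22/3)*(2/P0)"
  proof -
    have "x*x \<le> x*m" using xm pos by (intro mult_left_mono) auto
    moreover have "x*(y+z) = 2*(x*m)" using m by simp
    ultimately have h: "2*x^2 \<le> P0" using P unfolding power2_eq_square by linarith
    moreover have "0 < 2*x^2" using pos by simp
    ultimately have "P0 > 0" by linarith
    with h have "2/P0 \<le> 1/x^2" using pos by (simp add: field_simps)
    then show ?thesis by simp
  qed
  also have "\<dots> = -(44/(3*P0))" by simp
  finally have c: "2*T*A \<le> -(44/(3*P0))" .
  have u: "(y-z)^2/x^2 \<ge> 0" by simp
  show ?thesis unfolding E using mult_right_mono[OF c u] by simp
qed

lemma ineqW:
  assumes pos: "x>0" "y>0" "z>0" and s: "x/(y+z) \<le> 1/2" and u: "(y-z)^2/x^2 \<le> 1/250"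
    and dy: "dy = - TT x y z * qSL y (-x) z * y" and dz: "dz = - TT x y z * qSL z (-x) y * z"
  shows "2*(y+z)*(dy+dz) \<ge> 2/3"
proof -
  define m where "m = (y+z)/2"
  define e where "e = ((y-z)/2)^2"
  define T where "T = TT x y z"
  define nS where "nS = 6*x^4*m + 8*x^3*m^2 - 4*x^3*e + 2*x^2*m^3 - 2*x^2*m*e - 32*x*m^2*e - 16*x*e^2 - 72*m^3*e - 88*m*e^2"
  have m: "m > 0" "y + z = 2*m" using pos unfolding m_def by auto
  have e0: "e \<ge> 0" unfolding e_def by simp
  have ex: "e \<le> x^2/1000"
  proof -
    have "(y-z)^2 \<le> x^2/250" using u pos by (simp add: field_simps)
    then show ?thesis unfolding e_def by (simp add: power_divide)
  qed
  have xm: "x \<le> m" using s m by (simp add: field_simps)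
  have T: "T \<ge> 1/(6*x^2*m^4)" unfolding T_def by (rule T_lower[OF pos m_def])
  have Tp: "T > 0" unfolding T_def by (rule TT_pos[OF pos])
  have sum: "dy + dz = T*nS"
  proof -
    have "dy + dz = -T*(y*qSL y (-x) z + z*qSL z (-x) y)" unfolding dy dz T_def by (simp add: algebra_simps)
    then show ?thesis unfolding idS[OF m_def e_def] nS_def by (simp add: algebra_simps)
  qed
  have nS: "nS \<ge> x^2*m^3" unfolding nS_def by (rule polyS[OF pos(1) xm e0 ex])
  have "2/3 = 4*x^2*m^4*(1/(6*x^2*m^4))" using pos m by (simp add: field_simps)
  also have "\<dots> \<le> 4*x^2*m^4*T" using T by (intro mult_left_mono) auto
  also have "\<dots> = 4*m*T*(x^2*m^3)" by (simp add: algebra_simps eval_nat_numeral)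
  also have "\<dots> \<le> 4*m*T*nS" using nS Tp m by (intro mult_left_mono) auto
  also have "\<dots> = 2*(y+z)*(dy+dz)" unfolding sum m(2) by simp
  finally show ?thesis .
qed

lemma bnd_basic:
  fixes x y z :: real
  assumes pos: "y>0" "z>0" and r: "(y-z)^2 \<le> (y+z)^2/100"
  shows "y \<ge> 9/20*(y+z)" "z \<ge> 9/20*(y+z)" "y*z \<ge> (y+z)^2/5"
proof -
  have "(y-z)^2 \<le> ((y+z)/10)^2" using r by (simp add: power_divide)
  then have a: "\<bar>y-z\<bar> \<le> (y+z)/10" using pos by (subst (asm) power2_le_iff_abs_le) auto
  then show y: "y \<ge> 9/20*(y+z)" and z: "z \<ge> 9/20*(y+z)" by (auto simp: abs_if split: if_splits)
  have "(9/20*(y+z))*(9/20*(y+z)) \<le> y*z" using y z pos by (intro mult_mono) auto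
  moreover have "(9/20*(y+z))*(9/20*(y+z)) = 81/400*(y+z)^2" by (simp add: power2_eq_square algebra_simps)
  moreover have "(y+z)^2/5 \<le> 81/400*(y+z)^2" by simp
  ultimately show "y*z \<ge> (y+z)^2/5" by linarith
qed

lemma bndA:
  fixes x y z :: real
  assumes pos: "x>0" "y>0" "z>0" and M1: "y+z \<ge> 1" and P: "x*(y+z) \<le> P0"
    and r: "(y-z)^2 \<le> (y+z)^2/100" and u: "(y-z)^2 \<le> x^2"
  shows "\<bar>Ric11 x y z / x\<bar> \<le> 5*P0/(y+z)"
proof -
  define M where "M = y+z"
  have M: "M \<ge> 1" "M > 0" using M1 pos unfolding M_def by auto
  have yz: "y*z \<ge> M^2/5" using bnd_basic[OF pos(2,3) r] unfolding M_def by simp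
  have P0: "P0 \<ge> 0" using P pos M unfolding M_def by (smt (verit) mult_pos_pos)
  have "\<bar>Ric11 x y z / x\<bar> = \<bar>x^2 - (y-z)^2\<bar> / (2*y*z*x)" unfolding Ric11_def using pos
    by (simp add: abs_divide abs_mult)
  also have "\<dots> \<le> (2*x^2) / (2*y*z*x)" using pos u
    by (intro divide_right_mono) (auto simp: abs_le_iff)
  also have "\<dots> = x / (y*z)" using pos by (simp add: power2_eq_square)
  also have "\<dots> \<le> x / (M^2/5)" using yz pos M by (intro divide_left_mono) auto
  also have "\<dots> = 5*(x*M)/M^3" using M by (simp add: field_simps eval_nat_numeral)
  also have "\<dots> \<le> 5*P0/M^3" using P M unfolding M_def by (intro divide_right_mono) auto
  also have "\<dots> \<le> 5*P0/M"
  proof -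
    have "1*1 \<le> M*M" using M by (intro mult_mono) auto
    then have "M*1 \<le> M*(M*M)" using M by (intro mult_left_mono) auto
    then have "M \<le> M^3" by (simp add: power3_eq_cube)
    then show ?thesis using P0 M by (intro divide_left_mono) auto
  qed
  finally show ?thesis unfolding M_def .
qed

lemma bndB:
  fixes x y z :: real
  assumes pos: "x>0" "y>0" "z>0" and M1: "y+z \<ge> 1" and P: "x*(y+z) \<le> P0"
    and r: "(y-z)^2 \<le> (y+z)^2/100"
  shows "\<bar>Ric22 x y z + 1\<bar> \<le> 2 * sqrt((y-z)^2/x^2) + 2*P0/(y+z)"
proof -
  define M where "M = y+z"
  have M: "M \<ge> 1" "M > 0" using M1 pos unfolding M_def by auto
  have z: "z \<ge> 9/20*M" using bnd_basic[OF pos(2,3) r] unfolding M_def by simp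
  have P0: "P0 \<ge> 0" using P pos M unfolding M_def by (smt (verit) mult_pos_pos)
  have eq: "Ric22 x y z + 1 = ((y-z)/x)*(M/(2*z)) - x/(2*z)"
    unfolding Ric22_def M_def using pos
    by (simp add: field_simps power2_eq_square)
  have sq: "sqrt((y-z)^2/x^2) = \<bar>y-z\<bar>/x" using pos by (simp add: real_sqrt_divide)
  have "M/(2*z) \<le> M/(2*(9/20*M))" using z M pos by (intro divide_left_mono) auto
  also have "\<dots> \<le> 2" using M by simp
  finally have Mz: "M/(2*z) \<le> 2" .
  have "\<bar>((y-z)/x)*(M/(2*z))\<bar> = (\<bar>y-z\<bar>/x)*(M/(2*z))" using pos M by (simp add: abs_mult)
  also have "\<dots> \<le> (\<bar>y-z\<bar>/x) * 2" using pos Mz by (intro mult_left_mono) auto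
  finally have t1: "\<bar>((y-z)/x)*(M/(2*z))\<bar> \<le> (\<bar>y-z\<bar>/x) * 2" .
  have "x/(2*z) \<le> x/(2*(9/20*M))" using z M pos by (intro divide_left_mono) auto
  also have "\<dots> = (10/9)*(x*M)/M^2" using M by (simp add: field_simps power2_eq_square)
  also have "\<dots> \<le> (10/9)*P0/M^2" using P M unfolding M_def by (intro divide_right_mono) auto
  also have "\<dots> \<le> 2*P0/M"
  proof -
    have "(10/9)*P0 \<le> 2*P0" using P0 by simp
    moreover have "M \<le> M^2" using M by (simp add: power2_eq_square)
    ultimately show ?thesis using P0 M by (intro frac_le) auto
  qed
  finally have t2: "\<bar>x/(2*z)\<bar> \<le> 2*P0/M" using pos by simp
  have "\<bar>((y-z)/x)*(M/(2*z)) - x/(2*z)\<bar> \<le> (\<bar>y-z\<bar>/x) * 2 + 2*P0/M"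
    using abs_triangle_ineq4[of "((y-z)/x)*(M/(2*z))" "x/(2*z)"] t1 t2 by linarith
  then show ?thesis unfolding eq sq M_def by (simp add: mult.commute)
qed

lemma bndD:
  fixes x y z :: real
  assumes pos: "x>0" "y>0" "z>0" and M1: "y+z \<ge> 1" and P: "x*(y+z) \<le> P0"
    and r: "(y-z)^2 \<le> (y+z)^2/100" and u: "(y-z)^2 \<le> x^2"
  shows "\<bar>scalS x y z\<bar> \<le> 5*P0/(y+z) + 5/(y+z)"
proof -
  define M where "M = y+z"
  have M: "M \<ge> 1" "M > 0" using M1 pos unfolding M_def by auto
  have yz: "y*z \<ge> M^2/5" using bnd_basic[OF pos(2,3) r] unfolding M_def by simp
  have P0: "P0 \<ge> 0" using P pos M unfolding M_def by (smt (verit) mult_pos_pos)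
  have nn: "x^2 + (y-z)^2 + 2*x*M \<ge> 0" using pos M by simp
  have num: "x^2+y^2+z^2+2*(x*y+x*z-y*z) = x^2+(y-z)^2+2*x*M"
    by (simp add: M_def power2_eq_square algebra_simps)
  have "scalS x y z = - ((x^2 + (y-z)^2 + 2*x*M) / (2*x*y*z))" unfolding scalS_def num by (simp add: minus_divide_left)
  then have "\<bar>scalS x y z\<bar> = \<bar>(x^2 + (y-z)^2 + 2*x*M) / (2*x*y*z)\<bar>" by simp
  also have "\<dots> = (x^2 + (y-z)^2 + 2*x*M) / (2*x*y*z)" using pos nn by simp
  also have "\<dots> \<le> (2*x^2 + 2*x*M) / (2*x*y*z)" using pos u by (intro divide_right_mono) auto
  also have "\<dots> = (x + M)/(y*z)" using pos by (simp add: field_simps power2_eq_square)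
  also have "\<dots> \<le> (x+M)/(M^2/5)" using yz pos M by (intro divide_left_mono) auto
  also have "\<dots> = 5*(x*M)/M^3 + 5/M" using M by (simp add: field_simps eval_nat_numeral)
  also have "\<dots> \<le> 5*P0/M^3 + 5/M" using P M unfolding M_def by (intro add_mono divide_right_mono) auto
  also have "\<dots> \<le> 5*P0/M + 5/M"
  proof -
    have "1*1 \<le> M*M" using M by (intro mult_mono) auto
    then have "M*1 \<le> M*(M*M)" using M by (intro mult_left_mono) auto
    then have "M \<le> M^3" by (simp add: power3_eq_cube)
    then show ?thesis using P0 M by (intro add_mono divide_left_mono) auto
  qed
  finally show ?thesis unfolding M_def .
qed

lemma Ric33_swap: "Ric33 x y z = Ric22 x z y"
  unfolding Ric33_def Ric22_def by (simp add: algebra_simps)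


lemma exp_decay_tendsto:
  fixes k C t0 :: real
  assumes k: "k > 0"
  shows "((\<lambda>t. C * exp (- k * (t - t0))) \<longlongrightarrow> 0) at_top"
proof -
  have l: "filterlim (\<lambda>t::real. (-k) * t) at_bot at_top"
    by (rule filterlim_tendsto_neg_mult_at_bot[OF tendsto_const]) (use k in \<open>auto intro: filterlim_ident\<close>)
  have "((\<lambda>t. exp ((-k) * t)) \<longlongrightarrow> 0) at_top"
    using filterlim_compose[OF exp_at_bot l] by (simp add: o_def)
  then have "((\<lambda>t. (C * exp (k*t0)) * exp ((-k) * t)) \<longlongrightarrow> 0) at_top"
    by (rule tendsto_mult_right_zero)
  moreover have "(\<lambda>t. (C * exp (k*t0)) * exp ((-k) * t)) = (\<lambda>t. C * exp (- k * (t - t0)))"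
    by (rule ext) (simp add: algebra_simps exp_add[symmetric])
  ultimately show ?thesis by simp
qed


lemma deriv_eq: "(f has_real_derivative D) F \<Longrightarrow> D = E \<Longrightarrow> (f has_real_derivative E) F"
  by simp

lemma exp_eventually:
  assumes "k > 0" "\<epsilon> > 0"
  shows "\<exists>t1\<ge>(0::real). \<forall>t\<ge>t1. C * exp (- k * (t - t0)) \<le> \<epsilon>"
proof -
  have "((\<lambda>t. C * exp (- k * (t - t0))) \<longlongrightarrow> 0) at_top" by (rule exp_decay_tendsto[OF assms(1)])
  then have "\<forall>\<^sub>F t in at_top. C * exp (- k * (t - t0)) < \<epsilon>" using assms(2) by (rule order_tendstoD)
  then obtain N where N: "\<forall>t\<ge>N. C * exp (- k * (t - t0)) < \<epsilon>" by (auto simp: eventually_at_top_linorder)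
  show ?thesis by (rule exI[of _ "max N 0"]) (use N in \<open>auto intro: less_imp_le\<close>)
qed

lemma main:
  fixes x y z :: "real \<Rightarrow> real"
  assumes posx: "\<And>t. t \<ge> 0 \<Longrightarrow> x t > 0" and posy: "\<And>t. t \<ge> 0 \<Longrightarrow> y t > 0"
    and posz: "\<And>t. t \<ge> 0 \<Longrightarrow> z t > 0"
    and dx: "\<And>t. t \<ge> 0 \<Longrightarrow> (x has_real_derivative (- TT (x t) (y t) (z t) * qSL (- x t) (y t) (z t) * x t)) (at t within {0..})"
    and dy: "\<And>t. t \<ge> 0 \<Longrightarrow> (y has_real_derivative (- TT (x t) (y t) (z t) * qSL (y t) (- x t) (z t) * y t)) (at t within {0..})"
    and dz: "\<And>t. t \<ge> 0 \<Longrightarrow> (z has_real_derivative (- TT (x t) (y t) (z t) * qSL (z t) (- x t) (y t) * z t)) (at t within {0..})"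
  shows "((\<lambda>t. Ric11 (x t) (y t) (z t) / x t) \<longlongrightarrow> 0) at_top \<and>
         ((\<lambda>t. Ric22 (x t) (y t) (z t)) \<longlongrightarrow> -1) at_top \<and>
         ((\<lambda>t. Ric33 (x t) (y t) (z t)) \<longlongrightarrow> -1) at_top \<and>
         ((\<lambda>t. scalS (x t) (y t) (z t)) \<longlongrightarrow> 0) at_top"
proof -
  define dX where "dX = (\<lambda>t. - TT (x t) (y t) (z t) * qSL (- x t) (y t) (z t) * x t)"
  define dY where "dY = (\<lambda>t. - TT (x t) (y t) (z t) * qSL (y t) (- x t) (z t) * y t)"
  define dZ where "dZ = (\<lambda>t. - TT (x t) (y t) (z t) * qSL (z t) (- x t) (y t) * z t)"
  have dx': "\<And>t. t \<ge> 0 \<Longrightarrow> (x has_real_derivative dX t) (at t within {0..})" using dx unfolding dX_def by simp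
  have dy': "\<And>t. t \<ge> 0 \<Longrightarrow> (y has_real_derivative dY t) (at t within {0..})" using dy unfolding dY_def by simp
  have dz': "\<And>t. t \<ge> 0 \<Longrightarrow> (z has_real_derivative dZ t) (at t within {0..})" using dz unfolding dZ_def by simp
  have pos: "\<And>t. t \<ge> 0 \<Longrightarrow> x t > 0 \<and> y t > 0 \<and> z t > 0" using posx posy posz by auto

  define P where "P = (\<lambda>t. x t * (y t + z t))"
  have dP: "\<And>t. t \<ge> 0 \<Longrightarrow> (P has_real_derivative (dX t * (y t + z t) + x t * (dY t + dZ t))) (at t within {0..})"
    unfolding P_def
    by (rule deriv_eq[OF DERIV_mult[OF dx' DERIV_add[OF dy' dz']]]) (auto simp: algebra_simps)
  define P0 where "P0 = P 0"
  have Pb: "P t \<le> P0" if "t \<ge> 0" for t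
    unfolding P0_def
  proof (rule gen_anti[OF dP _ that])
    fix s assume "0 < s" "s < t"
    then show "dX s * (y s + z s) + x s * (dY s + dZ s) \<le> 0"
      unfolding dX_def dY_def dZ_def using ineqP pos[of s] by auto
  qed auto
  have P0pos: "P0 > 0" unfolding P0_def P_def using pos[of 0] by simp

  define R where "R = (\<lambda>t. (y t - z t)^2 / (y t + z t)^2)"
  define dR where "dR = (\<lambda>t. (2*(y t - z t)*(dY t - dZ t)*(y t + z t)^2 - (y t - z t)^2*(2*(y t + z t)*(dY t + dZ t))) / ((y t + z t)^2)^2)"
  have dRd: "\<And>t. t \<ge> 0 \<Longrightarrow> (R has_real_derivative dR t) (at t within {0..})"
  proof -
    fix t :: real assume t: "t \<ge> 0"
    have nz: "(y t + z t)^2 \<noteq> 0" using pos[OF t] by simp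
    show "(R has_real_derivative dR t) (at t within {0..})"
      unfolding R_def dR_def
      by (rule deriv_eq[OF DERIV_divide[OF DERIV_power[OF DERIV_diff[OF dy'[OF t] dz'[OF t]]]
            DERIV_power[OF DERIV_add[OF dy'[OF t] dz'[OF t]]] nz]])
         (simp add: power2_eq_square algebra_simps)
  qed
  define \<kappa> where "\<kappa> = 32/(3*P0)"
  have Rdec: "R t \<le> R 0 * exp (- \<kappa> * (t - 0))" if "t \<ge> 0" for t
  proof (rule gen_gronwall[OF dRd _ _ that])
    fix s :: real assume "s \<ge> 0"
    show "dR s \<le> - \<kappa> * R s"
      unfolding dR_def R_def \<kappa>_def
      by (rule ineqR[of "x s"]) (use pos[of s] Pb[of s] \<open>s \<ge> 0\<close> in \<open>auto simp: dY_def dZ_def P_def\<close>)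
  qed auto
  obtain t1 where t1: "t1 \<ge> 0" "\<And>t. t \<ge> t1 \<Longrightarrow> R 0 * exp (- \<kappa> * (t - 0)) \<le> 1/100"
    using exp_eventually[of \<kappa> "1/100" "R 0" 0] P0pos unfolding \<kappa>_def by auto
  have Rt1: "R t \<le> 1/100" if "t \<ge> t1" for t using Rdec[of t] t1 that by force

  define Sg where "Sg = (\<lambda>t. x t / (y t + z t))"
  define dS where "dS = (\<lambda>t. (dX t * (y t + z t) - x t * (dY t + dZ t)) / (y t + z t)^2)"
  have dSd: "\<And>t. t \<ge> 0 \<Longrightarrow> (Sg has_real_derivative dS t) (at t within {0..})"
  proof -
    fix t :: real assume t: "t \<ge> 0"
    have nz: "y t + z t \<noteq> 0" using pos[OF t] by simp
    show "(Sg has_real_derivative dS t) (at t within {0..})"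
      unfolding Sg_def dS_def
      by (rule deriv_eq[OF DERIV_divide[OF dx'[OF t] DERIV_add[OF dy'[OF t] dz'[OF t]] nz]])
         (simp add: power2_eq_square algebra_simps)
  qed
  obtain t2 where t2: "t2 \<ge> t1" "\<And>t. t \<ge> t2 \<Longrightarrow> Sg t \<le> 1/2"
  proof -
    have "\<exists>t2\<ge>t1. \<forall>t\<ge>t2. Sg t \<le> 1/2"
    proof (rule gen_barrier[OF dSd t1(1)])
      show "4/(3*P0) > 0" using P0pos by simp
      fix t assume t: "t \<ge> t1" "1/2 \<le> Sg t"
      then have t0: "t \<ge> 0" using t1 by simp
      have "dS t \<le> -4/(3*P0)" unfolding dS_def
        by (rule ineqS[of "x t"])
           (use pos[OF t0] Pb[OF t0] Rt1[OF t(1)] t(2) in \<open>auto simp: dX_def dY_def dZ_def R_def Sg_def P_def\<close>)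
      then show "dS t \<le> - (4/(3*P0))" by simp
    qed auto
    then show ?thesis using that by blast
  qed
  have t20: "t2 \<ge> 0" using t1 t2 by simp

  define U where "U = (\<lambda>t. (y t - z t)^2 / (x t)^2)"
  define dU where "dU = (\<lambda>t. (2*(y t - z t)*(dY t - dZ t)*(x t)^2 - (y t - z t)^2*(2*x t*dX t)) / ((x t)^2)^2)"
  have dUd: "\<And>t. t \<ge> 0 \<Longrightarrow> (U has_real_derivative dU t) (at t within {0..})"
  proof -
    fix t :: real assume t: "t \<ge> 0"
    have nz: "(x t)^2 \<noteq> 0" using pos[OF t] by simp
    show "(U has_real_derivative dU t) (at t within {0..})"
      unfolding U_def dU_def
      by (rule deriv_eq[OF DERIV_divide[OF DERIV_power[OF DERIV_diff[OF dy'[OF t] dz'[OF t]]]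
            DERIV_power[OF dx'[OF t]] nz]])
         (simp add: power2_eq_square algebra_simps)
  qed
  define k2 where "k2 = 44/(3*P0)"
  have Udec: "U t \<le> U t2 * exp (- k2 * (t - t2))" if "t \<ge> t2" for t
  proof (rule gen_gronwall[OF dUd t20 _ that])
    fix s :: real assume s: "s \<ge> t2"
    then have s0: "s \<ge> 0" using t20 by simp
    show "dU s \<le> - k2 * U s"
      unfolding dU_def U_def k2_def
      by (rule ineqU[of "x s"])
         (use pos[OF s0] Pb[OF s0] t2(2)[OF s] in \<open>auto simp: dX_def dY_def dZ_def Sg_def P_def\<close>)
  qed
  have U0: "U t \<ge> 0" for t unfolding U_def by simp
  have Ulim: "(U \<longlongrightarrow> 0) at_top"
  proof -
    have "((\<lambda>t. U t2 * exp (- k2 * (t - t2))) \<longlongrightarrow> 0) at_top" unfolding k2_def by (rule exp_decay_tendsto) (use P0pos in simp)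
    moreover have "\<forall>\<^sub>F t in at_top. norm (U t) \<le> U t2 * exp (- k2 * (t - t2))"
      using Udec U0 by (auto simp: eventually_at_top_linorder intro!: exI[of _ t2])
    ultimately show ?thesis by (rule Lim_null_comparison[rotated])
  qed
  obtain t3 where t3: "t3 \<ge> t2" "\<And>t. t \<ge> t3 \<Longrightarrow> U t \<le> 1/250"
  proof -
    have "\<forall>\<^sub>F t in at_top. U t < 1/250" using Ulim by (rule order_tendstoD) simp
    then obtain N where N: "\<And>t. t \<ge> N \<Longrightarrow> U t < 1/250" by (auto simp: eventually_at_top_linorder)
    show ?thesis by (rule that[of "max N t2"]) (use N in \<open>auto intro: less_imp_le\<close>)
  qed
  have t30: "t3 \<ge> 0" using t20 t3 by simp

  define W where "W = (\<lambda>t. (y t + z t)^2)"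
  define dW where "dW = (\<lambda>t. 2*(y t + z t)*(dY t + dZ t))"
  have dWd: "\<And>t. t \<ge> 0 \<Longrightarrow> (W has_real_derivative dW t) (at t within {0..})"
  proof -
    fix t :: real assume t: "t \<ge> 0"
    show "(W has_real_derivative dW t) (at t within {0..})"
      unfolding W_def dW_def
      by (rule deriv_eq[OF DERIV_power[OF DERIV_add[OF dy'[OF t] dz'[OF t]]]])
         (simp add: algebra_simps)
  qed
  have Winc: "W t \<ge> W t3 + 2/3 * (t - t3)" if "t \<ge> t3" for t
  proof (rule gen_linear[OF dWd t30 _ that])
    fix s :: real assume s: "s \<ge> t3"
    then have s0: "s \<ge> 0" using t30 by simp
    have a: "x s/(y s+z s) \<le> 1/2" using t2(2)[of s] s t3(1) unfolding Sg_def by simp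
    have b: "(y s - z s)^2/(x s)^2 \<le> 1/250" using t3(2)[OF s] unfolding U_def .
    show "dW s \<ge> 2/3"
      unfolding dW_def
      by (rule ineqW[of "x s"]) (use pos[OF s0] a b in \<open>auto simp: dY_def dZ_def\<close>)
  qed
  have Mlim: "filterlim (\<lambda>t. y t + z t) at_top at_top"
  proof (subst filterlim_at_top, intro allI)
    fix Z :: real
    show "\<forall>\<^sub>F t in at_top. Z \<le> y t + z t"
    proof (rule eventually_at_top_linorder[THEN iffD2], intro exI allI impI)
      fix t assume t: "t \<ge> t3 + 3/2*Z^2"
      have tt: "t \<ge> t3" using t zero_le_power2[of Z] by linarith
      then have t0: "t \<ge> 0" using t30 by simp
      have "W t \<ge> W t3 + 2/3*(t - t3)" by (rule Winc[OF tt])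
      moreover have "W t3 \<ge> 0" unfolding W_def by simp
      moreover have "2/3*(t - t3) \<ge> Z^2" using t by simp
      ultimately have "Z^2 \<le> (y t + z t)^2" unfolding W_def by linarith
      then have "\<bar>Z\<bar> \<le> y t + z t" using pos[OF t0] by (subst (asm) power2_le_iff_abs_le) auto
      then show "Z \<le> y t + z t" by simp
    qed
  qed
  have invM: "((\<lambda>t. inverse (y t + z t)) \<longlongrightarrow> 0) at_top" by (rule tendsto_inverse_0_at_top[OF Mlim])
  obtain t4 where t4: "t4 \<ge> t3" "\<And>t. t \<ge> t4 \<Longrightarrow> y t + z t \<ge> 1"
  proof -
    have "\<forall>\<^sub>F t in at_top. 1 \<le> y t + z t" using Mlim by (simp add: filterlim_at_top)
    then obtain N where N: "\<And>t. t \<ge> N \<Longrightarrow> 1 \<le> y t + z t" by (auto simp: eventually_at_top_linorder)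
    show ?thesis by (rule that[of "max N t3"]) (use N in auto)
  qed
  have ev: "\<forall>\<^sub>F t in at_top. x t > 0 \<and> y t > 0 \<and> z t > 0 \<and> y t + z t \<ge> 1 \<and> x t * (y t + z t) \<le> P0
     \<and> (y t - z t)^2 \<le> (y t + z t)^2/100 \<and> (y t - z t)^2 \<le> (x t)^2"
  proof (rule eventually_at_top_linorder[THEN iffD2], intro exI allI impI)
    fix t assume t: "t \<ge> t4"
    then have tt: "t \<ge> t3" "t \<ge> t2" "t \<ge> t1" "t \<ge> 0" using t4 t3 t2 t1 by auto
    have "R t \<le> 1/100" by (rule Rt1[OF tt(3)])
    then have r: "(y t - z t)^2 \<le> (y t + z t)^2/100" using pos[OF tt(4)] unfolding R_def by (simp add: field_simps)
    have "U t \<le> 1/250" by (rule t3(2)[OF tt(1)])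
    then have "250*(y t - z t)^2 \<le> (x t)^2" using pos[OF tt(4)] unfolding U_def by (simp add: field_simps)
    then have u: "(y t - z t)^2 \<le> (x t)^2" using zero_le_power2[of "y t - z t"] by linarith
    show "x t > 0 \<and> y t > 0 \<and> z t > 0 \<and> y t + z t \<ge> 1 \<and> x t * (y t + z t) \<le> P0
     \<and> (y t - z t)^2 \<le> (y t + z t)^2/100 \<and> (y t - z t)^2 \<le> (x t)^2"
      using pos[OF tt(4)] t4(2)[OF t] Pb[OF tt(4)] r u unfolding P_def by auto
  qed
  have lim1: "((\<lambda>t. Ric11 (x t) (y t) (z t) / x t) \<longlongrightarrow> 0) at_top"
  proof (rule Lim_null_comparison)
    show "\<forall>\<^sub>F t in at_top. norm (Ric11 (x t) (y t) (z t) / x t) \<le> 5*P0 * inverse (y t + z t)"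
      using ev
    proof eventually_elim
      case (elim t)
      have "\<bar>Ric11 (x t) (y t) (z t) / x t\<bar> \<le> 5*P0/(y t + z t)" by (rule bndA) (use elim in auto)
      then show ?case by (simp add: divide_inverse)
    qed
    show "((\<lambda>t. 5*P0 * inverse (y t + z t)) \<longlongrightarrow> 0) at_top"
      using tendsto_mult_right_zero[OF invM] by simp
  qed
  have sqU: "((\<lambda>t. sqrt (U t)) \<longlongrightarrow> 0) at_top" using tendsto_real_sqrt[OF Ulim] by simp
  have B: "((\<lambda>t. 2 * sqrt (U t) + 2*P0 * inverse (y t + z t)) \<longlongrightarrow> 0) at_top"
    using tendsto_add[OF tendsto_mult_right_zero[OF sqU, of 2] tendsto_mult_right_zero[OF invM, of "2*P0"]] by simp
  have lim2: "((\<lambda>t. Ric22 (x t) (y t) (z t)) \<longlongrightarrow> -1) at_top"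
  proof -
    have "((\<lambda>t. Ric22 (x t) (y t) (z t) + 1) \<longlongrightarrow> 0) at_top"
    proof (rule Lim_null_comparison[OF _ B])
      show "\<forall>\<^sub>F t in at_top. norm (Ric22 (x t) (y t) (z t) + 1) \<le> 2 * sqrt (U t) + 2*P0 * inverse (y t + z t)"
        using ev
      proof eventually_elim
        case (elim t)
        have "\<bar>Ric22 (x t) (y t) (z t) + 1\<bar> \<le> 2 * sqrt ((y t - z t)^2/(x t)^2) + 2*P0/(y t + z t)"
          by (rule bndB) (use elim in auto)
        then show ?case by (simp add: divide_inverse U_def)
      qed
    qed
    from tendsto_add[OF this tendsto_const[of "-1"]] show ?thesis by simp
  qed
  have lim3: "((\<lambda>t. Ric33 (x t) (y t) (z t)) \<longlongrightarrow> -1) at_top"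
  proof -
    have "((\<lambda>t. Ric33 (x t) (y t) (z t) + 1) \<longlongrightarrow> 0) at_top"
    proof (rule Lim_null_comparison[OF _ B])
      show "\<forall>\<^sub>F t in at_top. norm (Ric33 (x t) (y t) (z t) + 1) \<le> 2 * sqrt (U t) + 2*P0 * inverse (y t + z t)"
        using ev
      proof eventually_elim
        case (elim t)
        have "\<bar>Ric22 (x t) (z t) (y t) + 1\<bar> \<le> 2 * sqrt ((z t - y t)^2/(x t)^2) + 2*P0/(z t + y t)"
          by (rule bndB) (use elim in \<open>auto simp: add.commute power2_commute\<close>)
        then show ?case unfolding Ric33_swap U_def by (simp add: power2_commute add.commute divide_inverse)
      qed
    qed
    from tendsto_add[OF this tendsto_const[of "-1"]] show ?thesis by simp
  qed
  have lim4: "((\<lambda>t. scalS (x t) (y t) (z t)) \<longlongrightarrow> 0) at_top"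
  proof (rule Lim_null_comparison)
    show "\<forall>\<^sub>F t in at_top. norm (scalS (x t) (y t) (z t)) \<le> (5*P0 + 5) * inverse (y t + z t)"
      using ev
    proof eventually_elim
      case (elim t)
      have "\<bar>scalS (x t) (y t) (z t)\<bar> \<le> 5*P0/(y t + z t) + 5/(y t + z t)" by (rule bndD) (use elim in auto)
      then show ?case by (simp add: divide_inverse algebra_simps)
    qed
    show "((\<lambda>t. (5*P0 + 5) * inverse (y t + z t)) \<longlongrightarrow> 0) at_top"
      using tendsto_mult_right_zero[OF invM] by simp
  qed
  show ?thesis using lim1 lim2 lim3 lim4 by blast
qed



lemma pos_from_nonzero:
  fixes f :: "real \<Rightarrow> real"
  assumes c: "continuous_on {0..} f" and f0: "f 0 > 0" and nz: "\<And>t. t \<ge> 0 \<Longrightarrow> f t \<noteq> 0" and t: "t \<ge> 0"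
  shows "f t > 0"
proof (rule ccontr)
  assume "\<not> f t > 0"
  then have "f t \<le> 0" by simp
  moreover have "continuous_on {0..t} f" using c by (rule continuous_on_subset) auto
  ultimately obtain s where "0 \<le> s" "s \<le> t" "f s = 0" using IVT2'[of f t 0 0] f0 t by auto
  then show False using nz by auto
qed

lemma aux_D: "((( -b*p*a^3) * x + (-b*q1*a^2*x) * a) * y + (-b*q2*a^2*y) * (a*x)) * z + (-b*q3*a^2*z)*(a*x*y)
   = -b*a^3*x*y*z*(p+q1+q2+q3)" for a b p q1 q2 q3 x y z :: real
  by algebra

lemma reduce:
  fixes g00 g11 g22 g33 :: "real \<Rightarrow> real" and h00 h11 h22 h33 :: real
  assumes hpos: "h00 > 0" "h11 > 0" "h22 > 0" "h33 > 0"
    and sol: "solves_SL g00 g11 g22 g33 h00 h11 h22 h33"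
  shows "\<And>t. t \<ge> 0 \<Longrightarrow> g11 t > 0" "\<And>t. t \<ge> 0 \<Longrightarrow> g22 t > 0" "\<And>t. t \<ge> 0 \<Longrightarrow> g33 t > 0"
    "\<And>t. t \<ge> 0 \<Longrightarrow> (g11 has_real_derivative (- TT (g11 t) (g22 t) (g33 t) * qSL (- g11 t) (g22 t) (g33 t) * g11 t)) (at t within {0..})"
    "\<And>t. t \<ge> 0 \<Longrightarrow> (g22 has_real_derivative (- TT (g11 t) (g22 t) (g33 t) * qSL (g22 t) (- g11 t) (g33 t) * g22 t)) (at t within {0..})"
    "\<And>t. t \<ge> 0 \<Longrightarrow> (g33 has_real_derivative (- TT (g11 t) (g22 t) (g33 t) * qSL (g33 t) (- g11 t) (g22 t) * g33 t)) (at t within {0..})"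
proof -
  define b where "b = betaSL h00 h11 h22 h33"
  note S = sol[unfolded solves_SL_def b_def[symmetric]]
  have da: "\<And>t. t \<ge> 0 \<Longrightarrow> (g00 has_real_derivative (- b * pSL (- g11 t) (g22 t) (g33 t) * (g00 t)^3)) (at t within {0..})"
    using S by blast
  have dx: "\<And>t. t \<ge> 0 \<Longrightarrow> (g11 has_real_derivative (- b * qSL (- g11 t) (g22 t) (g33 t) * (g00 t)^2 * g11 t)) (at t within {0..})"
    using S by blast
  have dy: "\<And>t. t \<ge> 0 \<Longrightarrow> (g22 has_real_derivative (- b * qSL (g22 t) (- g11 t) (g33 t) * (g00 t)^2 * g22 t)) (at t within {0..})"
    using S by blast
  have dz: "\<And>t. t \<ge> 0 \<Longrightarrow> (g33 has_real_derivative (- b * qSL (g33 t) (- g11 t) (g22 t) * (g00 t)^2 * g33 t)) (at t within {0..})"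
    using S by blast
  have init: "g00 0 = h00" "g11 0 = h11" "g22 0 = h22" "g33 0 = h33" using S by auto
  define D where "D = (\<lambda>t. g00 t * g11 t * g22 t * g33 t)"
  have dD: "\<And>t. t \<ge> 0 \<Longrightarrow> (D has_real_derivative 0) (at t within {0..})"
  proof -
    fix t :: real assume t: "t \<ge> 0"
    have "(D has_real_derivative (-b*(g00 t)^3*g11 t*g22 t*g33 t*(pSL (- g11 t) (g22 t) (g33 t)
        + qSL (- g11 t) (g22 t) (g33 t) + qSL (g22 t) (- g11 t) (g33 t) + qSL (g33 t) (- g11 t) (g22 t)))) (at t within {0..})"
      unfolding D_def
      by (rule deriv_eq[OF DERIV_mult[OF DERIV_mult[OF DERIV_mult[OF da[OF t] dx[OF t]] dy[OF t]] dz[OF t]]])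
         (rule aux_D)
    then show "(D has_real_derivative 0) (at t within {0..})" by (simp add: iddet)
  qed
  have dDm: "\<And>t. t \<ge> 0 \<Longrightarrow> ((\<lambda>t. - D t) has_real_derivative - 0) (at t within {0..})"
    using dD by (rule DERIV_minus)
  define D0 where "D0 = h00*h11*h22*h33"
  have D0: "D0 > 0" unfolding D0_def using hpos by simp
  have Dc: "D t = D0" if t: "t \<ge> 0" for t
  proof -
    have "D t \<le> D 0" by (rule gen_anti[OF dD _ t]) auto
    moreover have "- D t \<le> - D 0" by (rule gen_anti[OF dDm _ t]) auto
    ultimately show ?thesis unfolding D0_def using init D_def by simp
  qed
  have nz: "g00 t \<noteq> 0 \<and> g11 t \<noteq> 0 \<and> g22 t \<noteq> 0 \<and> g33 t \<noteq> 0" if "t \<ge> 0" for t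
    using Dc[OF that] D0 unfolding D_def by auto
  have ca: "continuous_on {0..} g00" by (rule gen_cont[OF da])
  have cx: "continuous_on {0..} g11" by (rule gen_cont[OF dx])
  have cy: "continuous_on {0..} g22" by (rule gen_cont[OF dy])
  have cz: "continuous_on {0..} g33" by (rule gen_cont[OF dz])
  show px: "\<And>t. t \<ge> 0 \<Longrightarrow> g11 t > 0" by (rule pos_from_nonzero[OF cx]) (use init hpos nz in auto)
  show py: "\<And>t. t \<ge> 0 \<Longrightarrow> g22 t > 0" by (rule pos_from_nonzero[OF cy]) (use init hpos nz in auto)
  show pz: "\<And>t. t \<ge> 0 \<Longrightarrow> g33 t > 0" by (rule pos_from_nonzero[OF cz]) (use init hpos nz in auto)
  have bT: "b * (g00 t)^2 = TT (g11 t) (g22 t) (g33 t)" if t: "t \<ge> 0" for t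
  proof -
    have "b = 1/(6*(D t)^2)" unfolding b_def betaSL_def Dc[OF t] D0_def ..
    then show ?thesis unfolding TT_def D_def using nz[OF t] by (simp add: field_simps power2_eq_square)
  qed
  show "\<And>t. t \<ge> 0 \<Longrightarrow> (g11 has_real_derivative (- TT (g11 t) (g22 t) (g33 t) * qSL (- g11 t) (g22 t) (g33 t) * g11 t)) (at t within {0..})"
  proof -
    fix t :: real assume t: "t \<ge> 0"
    show "?thesis t" by (rule deriv_eq[OF dx[OF t]]) (simp add: bT[OF t, symmetric] algebra_simps)
  qed
  show "\<And>t. t \<ge> 0 \<Longrightarrow> (g22 has_real_derivative (- TT (g11 t) (g22 t) (g33 t) * qSL (g22 t) (- g11 t) (g33 t) * g22 t)) (at t within {0..})"
  proof -
    fix t :: real assume t: "t \<ge> 0"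
    show "?thesis t" by (rule deriv_eq[OF dy[OF t]]) (simp add: bT[OF t, symmetric] algebra_simps)
  qed
  show "\<And>t. t \<ge> 0 \<Longrightarrow> (g33 has_real_derivative (- TT (g11 t) (g22 t) (g33 t) * qSL (g33 t) (- g11 t) (g22 t) * g33 t)) (at t within {0..})"
  proof -
    fix t :: real assume t: "t \<ge> 0"
    show "?thesis t" by (rule deriv_eq[OF dz[OF t]]) (simp add: bT[OF t, symmetric] algebra_simps)
  qed
qed

theorem proposition5p14:
  fixes g00 g11 g22 g33 :: "real \<Rightarrow> real" and h00 h11 h22 h33 :: real
  assumes "h00 > 0" "h11 > 0" "h22 > 0" "h33 > 0"
    and "solves_SL g00 g11 g22 g33 h00 h11 h22 h33"
  shows "((\<lambda>t. Ric11 (g11 t) (g22 t) (g33 t) / g11 t) \<longlongrightarrow> 0) at_top \<and>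
         ((\<lambda>t. Ric22 (g11 t) (g22 t) (g33 t)) \<longlongrightarrow> -1) at_top \<and>
         ((\<lambda>t. Ric33 (g11 t) (g22 t) (g33 t)) \<longlongrightarrow> -1) at_top \<and>
         ((\<lambda>t. scalS (g11 t) (g22 t) (g33 t)) \<longlongrightarrow> 0) at_top"
  using reduce[OF assms] by (rule main)


end
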